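(* Let $E$ be a $k$-dimensional subspace of $\mathbb{C}^n$ with $k>1$ such that $E$ does not contain the fully synchrony subspace $F=\{x_1=\cdots=x_n\}$. Then there exist one-dimensional subspaces $J_1,\dots,J_k$ of $E$, each special in $E$, such that $E=J_1\oplus\cdots\oplus J_k$.
   Context: A polydiagonal is a subspace of $\mathbb{C}^n$ of the form $\{x\in\mathbb{C}^n : x_i=x_j \text{ for all } (i,j)\in R\}$ for some (possibly empty) set $R$ of pairs of indices in $\{1,\dots,n\}$. For a subspace $W\subseteq\mathbb{C}^n$, $P(W)$ denotes the smallest polydiagonal containing $W$. Given a subspace $E$ of $\mathbb{C}^n$, a subspace $W$ of $E$ is called special in $E$ if for every subspace $U$ of $E$ with $\dim U=\dim W$ and $P(U)\subseteq P(W)$ one has $P(U)=P(W)$. *)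

theory Defs
  imports "HOL-Analysis.Analysis"
begin

text \<open>C^n is modelled as complex ^ 'n ('n a finite index type, n = CARD('n)),
 a vector space over the complex numbers via scalar multiplication (*s);
 subspaces/dimension are vec.subspace / vec.dim (complex-linear).\<close>

definition polydiagonal :: "(complex ^ 'n) set \<Rightarrow> bool" where
  "polydiagonal D \<longleftrightarrow> (\<exists>R :: ('n \<times> 'n) set. D = {x. \<forall>(i, j) \<in> R. x $ i = x $ j})"

definition polyP :: "(complex ^ 'n) set \<Rightarrow> (complex ^ 'n) set" where
  "polyP W = \<Inter> {D. polydiagonal D \<and> W \<subseteq> D}"

definition special_in :: "(complex ^ 'n) set \<Rightarrow> (complex ^ 'n) set \<Rightarrow> bool" where
  "special_in E W \<longleftrightarrow> vec.subspace W \<and> W \<subseteq> E \<and>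
     (\<forall>U. vec.subspace U \<and> U \<subseteq> E \<and> vec.dim U = vec.dim W \<and> polyP U \<subseteq> polyP W
          \<longrightarrow> polyP U = polyP W)"

definition full_synchrony :: "(complex ^ 'n) set" where
  "full_synchrony = {x. \<forall>i j. x $ i = x $ j}"

definition direct_sum_of :: "(complex ^ 'n) set \<Rightarrow> nat \<Rightarrow> (nat \<Rightarrow> (complex ^ 'n) set) \<Rightarrow> bool" where
  "direct_sum_of E k J \<longleftrightarrow>
     E = {(\<Sum>i<k. v i) | v. \<forall>i<k. v i \<in> J i} \<and>
     (\<forall>v w. (\<forall>i<k. v i \<in> J i \<and> w i \<in> J i) \<and> (\<Sum>i<k. v i) = (\<Sum>i<k. w i)
        \<longrightarrow> (\<forall>i<k. v i = w i))"

end

theory Submission imports Defs begin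

definition eqs :: "complex ^ 'n \<Rightarrow> ('n \<times> 'n) set" where
  "eqs v = {(i,j). v $ i = v $ j}"

definition PD :: "('n \<times> 'n) set \<Rightarrow> (complex ^ 'n) set" where
  "PD R = {x. \<forall>(i, j) \<in> R. x $ i = x $ j}"

lemma polyP_span: "polyP (vec.span {v}) = PD (eqs v)"
proof
  have "vec.subspace (PD (eqs v))"
    unfolding vec.subspace_def PD_def by (auto split: prod.splits)
  moreover have "v \<in> PD (eqs v)" by (auto simp: PD_def eqs_def)
  ultimately have "vec.span {v} \<subseteq> PD (eqs v)" by (simp add: vec.span_minimal)
  moreover have "polydiagonal (PD (eqs v))" unfolding polydiagonal_def PD_def by blast
  ultimately show "polyP (vec.span {v}) \<subseteq> PD (eqs v)" unfolding polyP_def by blast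
next
  show "PD (eqs v) \<subseteq> polyP (vec.span {v})"
    unfolding polyP_def
  proof (rule Inter_greatest)
    fix D assume "D \<in> {D. polydiagonal D \<and> vec.span {v} \<subseteq> D}"
    hence pd: "polydiagonal D" and sub: "vec.span {v} \<subseteq> D" by auto
    then obtain R where R: "D = {x. \<forall>(i, j) \<in> R. x $ i = x $ j}" unfolding polydiagonal_def by blast
    have "v \<in> D" using sub vec.span_base by blast
    hence "R \<subseteq> eqs v" using R by (auto simp: eqs_def)
    thus "PD (eqs v) \<subseteq> D" using R by (auto simp: PD_def)
  qed
qed

lemma PD_sub_iff: "PD (eqs u) \<subseteq> PD (eqs v) \<longleftrightarrow> eqs v \<subseteq> eqs u"
proof
  assume "PD (eqs u) \<subseteq> PD (eqs v)"
  moreover have "u \<in> PD (eqs u)" by (auto simp: PD_def eqs_def)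
  ultimately have "u \<in> PD (eqs v)" by blast
  thus "eqs v \<subseteq> eqs u" unfolding PD_def eqs_def by blast
next
  assume "eqs v \<subseteq> eqs u"
  thus "PD (eqs u) \<subseteq> PD (eqs v)" unfolding PD_def by blast
qed

lemma dim1:
  assumes "vec.subspace U" "vec.dim U = 1"
  shows "\<exists>u. u \<noteq> 0 \<and> U = vec.span {u}"
proof -
  obtain B where B: "B \<subseteq> U" "vec.independent B" "U \<subseteq> vec.span B"
    using vec.maximal_independent_subset by blast
  have "card B = 1" using vec.basis_card_eq_dim[OF B(1) B(3) B(2)] assms by simp
  then obtain u where u: "B = {u}" using card_1_singletonE by blast
  have "u \<noteq> 0" using B(2) u vec.dependent_zero by blast
  moreover have "vec.span B \<subseteq> U" using B(1) assms(1) vec.span_minimal by blast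
  ultimately show ?thesis using B(3) u by blast
qed

lemma dim_span1: "v \<noteq> 0 \<Longrightarrow> vec.dim (vec.span {v}) = 1"
proof -
  assume "v \<noteq> 0"
  hence "vec.independent {v}" using vec.independent_insertI[of v "{}"] by (simp add: vec.span_empty)
  thus ?thesis by (simp add: vec.dim_span_eq_card_independent)
qed


definition good :: "(complex ^ 'n) set \<Rightarrow> complex ^ 'n \<Rightarrow> bool" where
  "good E v \<longleftrightarrow> v \<in> E \<and> v \<noteq> 0 \<and> (\<forall>u\<in>E. u \<noteq> 0 \<and> eqs v \<subseteq> eqs u \<longrightarrow> eqs u \<subseteq> eqs v)"

lemma good_special:
  assumes E: "vec.subspace E" and g: "good E v"
  shows "special_in E (vec.span {v})"
proof -
  have vE: "v \<in> E" and v0: "v \<noteq> 0" using g by (auto simp: good_def)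
  have sub: "vec.span {v} \<subseteq> E" using vE E vec.span_minimal by blast
  have "polyP U = polyP (vec.span {v})"
    if U: "vec.subspace U" "U \<subseteq> E" "vec.dim U = vec.dim (vec.span {v})"
          "polyP U \<subseteq> polyP (vec.span {v})" for U
  proof -
    have "vec.dim U = 1" using U(3) dim_span1[OF v0] by simp
    then obtain u where u: "u \<noteq> 0" "U = vec.span {u}" using dim1 U(1) by blast
    have uE: "u \<in> E" using u U(2) vec.span_base by blast
    have "eqs v \<subseteq> eqs u" using U(4) u(2) polyP_span PD_sub_iff by metis
    hence "eqs u \<subseteq> eqs v" using g uE u(1) unfolding good_def by blast
    hence "eqs u = eqs v" using \<open>eqs v \<subseteq> eqs u\<close> by blast
    thus ?thesis using u(2) polyP_span by metis
  qed
  thus ?thesis unfolding special_in_def using sub by auto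
qed

lemma nonconst:
  assumes E: "vec.subspace E" and F: "\<not> full_synchrony \<subseteq> E" and uE: "u \<in> E" and u0: "u \<noteq> (0::complex^'n)"
  shows "\<exists>i j. u $ i \<noteq> u $ j"
proof (rule ccontr)
  assume "\<not> ?thesis"
  hence c: "\<And>i j. u $ i = u $ j" by blast
  obtain i0 where i0: "u $ i0 \<noteq> 0" using u0 by (metis vec_eq_iff zero_index)
  have "x \<in> E" if "x \<in> full_synchrony" for x
  proof -
    have xc: "\<And>i. x $ i = x $ i0" using that unfolding full_synchrony_def by blast
    have "x = (x $ i0 / u $ i0) *s u"
    proof (subst vec_eq_iff, intro allI)
      fix i show "x $ i = ((x $ i0 / u $ i0) *s u) $ i" using i0 xc[of i] c[of i i0] by simp
    qed
    thus ?thesis using vec.subspace_scale[OF E uE] by metis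
  qed
  thus False using F by blast
qed

lemma fin_neq: "finite (- eqs (v::complex^'n))"
  by simp

lemma spanning:
  assumes E: "vec.subspace E" and F: "\<not> full_synchrony \<subseteq> E"
  shows "E \<subseteq> vec.span {v. good E v}"
proof -
  have "\<forall>v. card (- eqs v) = m \<longrightarrow> v \<in> E \<longrightarrow> v \<in> vec.span {v. good E v}" for m
  proof (induction m rule: less_induct)
    case (less m)
    show ?case
    proof (intro allI impI)
      fix v assume m: "card (- eqs v) = m" and vE: "v \<in> E"
      show "v \<in> vec.span {v. good E v}"
      proof (cases "good E v")
        case True thus ?thesis by (simp add: vec.span_base)
      next
        case False
        show ?thesis
        proof (cases "v = 0")
          case True thus ?thesis by (simp add: vec.span_zero)
        next
          case v0: False
          with False vE obtain u where uE: "u \<in> E" "u \<noteq> 0" "eqs v \<subseteq> eqs u" "\<not> eqs u \<subseteq> eqs v"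
            unfolding good_def by blast
          have "- eqs u \<subset> - eqs v" using uE(3,4) by blast
          hence lt: "card (- eqs u) < m" using m psubset_card_mono fin_neq by metis
          have uS: "u \<in> vec.span {v. good E v}" using less.IH lt uE(1) by blast
          obtain i j where ij: "u $ i \<noteq> u $ j" using nonconst[OF E F uE(1,2)] by blast
          have vij: "v $ i \<noteq> v $ j" using ij uE(3) unfolding eqs_def by blast
          define t where "t = - (v $ i - v $ j) / (u $ i - u $ j)"
          define w where "w = v + t *s u"
          have wE: "w \<in> E" unfolding w_def using E vE uE(1) vec.subspace_add vec.subspace_scale by blast
          have "eqs v \<subseteq> eqs w"
          proof
            fix p assume p: "p \<in> eqs v"
            obtain a b where ab: "p = (a, b)" by fastforce
            have "v $ a = v $ b" using p ab unfolding eqs_def by blast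
            moreover have "u $ a = u $ b" using p ab uE(3) unfolding eqs_def by blast
            ultimately show "p \<in> eqs w" using ab unfolding eqs_def w_def by simp
          qed
          moreover have "(i, j) \<in> eqs w"
          proof -
            have d: "u $ i - u $ j \<noteq> 0" using ij by simp
            have "w $ i - w $ j = (v $ i - v $ j) + t * (u $ i - u $ j)"
              unfolding w_def by (simp add: algebra_simps)
            also have "\<dots> = 0" unfolding t_def using d by simp
            finally show ?thesis unfolding eqs_def by simp
          qed
          moreover have "(i, j) \<notin> eqs v" using vij unfolding eqs_def by simp
          ultimately have "- eqs w \<subset> - eqs v" by blast
          hence "card (- eqs w) < m" using m psubset_card_mono fin_neq by metis
          hence wS: "w \<in> vec.span {v. good E v}" using less.IH wE by blast
          have "v = w - t *s u" unfolding w_def by simp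
          thus ?thesis using wS uS vec.span_diff vec.span_scale by metis
        qed
      qed
    qed
  qed
  thus ?thesis by blast
qed


theorem mainTheorem3:
  fixes E :: "(complex ^ 'n) set" and k :: nat
  assumes "vec.subspace E"
    and "vec.dim E = k"
    and "k > 1"
    and "\<not> full_synchrony \<subseteq> E"
  shows "\<exists>J :: nat \<Rightarrow> (complex ^ 'n) set.
           (\<forall>i<k. vec.subspace (J i) \<and> J i \<subseteq> E \<and> vec.dim (J i) = 1 \<and> special_in E (J i))
           \<and> direct_sum_of E k J"
proof -
  note E = assms(1)
  define S where "S = {v. good E v}"
  have SE: "S \<subseteq> E" unfolding S_def good_def by blast
  have ES: "E \<subseteq> vec.span S" unfolding S_def using spanning[OF E assms(4)] .
  obtain B where B: "B \<subseteq> S" "vec.independent B" "S \<subseteq> vec.span B"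
    using vec.maximal_independent_subset by blast
  have spB: "vec.span S \<subseteq> vec.span B" using B(3) vec.span_minimal vec.subspace_span by blast
  have EB: "E \<subseteq> vec.span B" using ES spB by blast
  have BE: "B \<subseteq> E" using B(1) SE by blast
  have spBE: "vec.span B \<subseteq> E" using BE E vec.span_minimal by blast
  have cB: "card B = k" using vec.basis_card_eq_dim[OF BE EB B(2)] assms(2) by simp
  have fB: "finite B" using B(2) vec.finiteI_independent by blast
  obtain f where f: "bij_betw f {..<k} B"
    using ex_bij_betw_nat_finite[OF fB] cB by (metis lessThan_atLeast0)
  have fiB: "f i \<in> B" if "i < k" for i using f that bij_betwE by blast
  define J where "J i = vec.span {f i}" for i
  have JE: "J i \<subseteq> E" if "i < k" for i
    unfolding J_def using fiB[OF that] BE E vec.span_minimal by blast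
  have props: "vec.subspace (J i) \<and> J i \<subseteq> E \<and> vec.dim (J i) = 1 \<and> special_in E (J i)" if i: "i < k" for i
  proof -
    have g: "good E (f i)" using fiB[OF i] B(1) unfolding S_def by blast
    hence "f i \<noteq> 0" unfolding good_def by blast
    thus ?thesis using JE[OF i] dim_span1 good_special[OF E g] unfolding J_def by auto
  qed
  have reidx: "(\<Sum>i<k. g (f i)) = (\<Sum>b\<in>B. g b)" for g :: "complex^'n \<Rightarrow> complex^'n"
    using sum.reindex_bij_betw[OF f] .
  have part1: "E = {(\<Sum>i<k. v i) | v. \<forall>i<k. v i \<in> J i}"
  proof
    show "E \<subseteq> {(\<Sum>i<k. v i) | v. \<forall>i<k. v i \<in> J i}"
    proof
      fix x assume "x \<in> E"
      hence "x \<in> vec.span B" using EB by blast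
      then obtain c where c: "x = (\<Sum>b\<in>B. c b *s b)" using vec.span_finite[OF fB] by blast
      hence "x = (\<Sum>i<k. c (f i) *s f i)" using reidx[of "\<lambda>b. c b *s b"] by simp
      moreover have "\<forall>i<k. c (f i) *s f i \<in> J i"
        unfolding J_def by (simp add: vec.span_base vec.span_scale)
      ultimately show "x \<in> {(\<Sum>i<k. v i) | v. \<forall>i<k. v i \<in> J i}" by blast
    qed
  next
    show "{(\<Sum>i<k. v i) | v. \<forall>i<k. v i \<in> J i} \<subseteq> E"
    proof clarify
      fix v assume "\<forall>i<k. v i \<in> J i"
      thus "(\<Sum>i<k. v i) \<in> E" using JE E by (metis lessThan_iff subsetD vec.subspace_sum)
    qed
  qed
  have part2: "\<forall>v w. (\<forall>i<k. v i \<in> J i \<and> w i \<in> J i) \<and> (\<Sum>i<k. v i) = (\<Sum>i<k. w i)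
        \<longrightarrow> (\<forall>i<k. v i = w i)"
  proof (intro allI, rule impI)
    fix v w assume h: "(\<forall>i<k. v i \<in> J i \<and> w i \<in> J i) \<and> (\<Sum>i<k. v i) = (\<Sum>i<k. w i)"
    have "\<exists>a. v i = a *s f i" if "i < k" for i
      using h that unfolding J_def vec.span_singleton by blast
    then obtain a where a: "\<And>i. i < k \<Longrightarrow> v i = a i *s f i" by metis
    have "\<exists>a. w i = a *s f i" if "i < k" for i
      using h that unfolding J_def vec.span_singleton by blast
    then obtain b where b: "\<And>i. i < k \<Longrightarrow> w i = b i *s f i" by metis
    define g where "g x = a (inv_into {..<k} f x) - b (inv_into {..<k} f x)" for x
    have ginv: "g (f i) = a i - b i" if "i < k" for i
      unfolding g_def using that f bij_betw_inv_into_left by fastforce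
    have "(\<Sum>i<k. v i) - (\<Sum>i<k. w i) = 0" using h by simp
    hence "(\<Sum>i<k. v i - w i) = 0" by (simp add: sum_subtractf)
    moreover have "(\<Sum>i<k. v i - w i) = (\<Sum>i<k. g (f i) *s f i)"
      by (rule sum.cong) (simp_all add: a b ginv vector_sub_rdistrib)
    ultimately have "(\<Sum>b\<in>B. g b *s b) = 0" using reidx[of "\<lambda>b. g b *s b"] by simp
    hence "\<forall>x\<in>B. g x = 0" using vec.dependent_finite[OF fB] B(2) by blast
    show "\<forall>i<k. v i = w i"
    proof (intro allI impI)
      fix i assume i: "i < k"
      have "a i - b i = 0" using ginv[OF i] fiB[OF i] \<open>\<forall>x\<in>B. g x = 0\<close> by simp
      thus "v i = w i" using a[OF i] b[OF i] by simp
    qed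
  qed
  show ?thesis
    apply (rule exI[of _ J])
    using props part1 part2 unfolding direct_sum_of_def by blast
qed

end
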